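(* Let $R$ be a quotient root system with base $S$, let $\Phi \subseteq R^+$, and let $I, J \in \mathrm{Gen}(\Phi)$. Then $I \cup J \in \mathrm{Gen}(\Phi)$ and $I \cap J \in \mathrm{Gen}(\Phi)$.
   Context: A quotient root system (QRS) $R$ is the set of non-zero images of a root system $\Delta$ (with base $\Sigma$) under the orthogonal projection of its ambient Euclidean space onto $(\mathrm{span}\,J_0)^\perp$ for some $J_0\subsetneq\Sigma$; its base $S$ consists of the images of $\Sigma\setminus J_0$, and every root is an integer combination of $S$ with all coefficients $\ge0$ (positive roots, $R^+$) or all $\le0$. For $K \subseteq S$: $R_K = R\cap\mathrm{span}\,K$, $R_K^+=R_K\cap R^+$; $\pi_K$ is orthogonal projection onto $(\mathrm{span}\,K)^\perp$, $R/K$ is the set of non-zero elements of $\pi_K(R)$ and $(R/K)^+=\pi_K(R^+)\setminus\{0\}$. Inflation: for $\Psi\subseteq(R/K)^+$, $X\subseteq R_K^+$, $\inf_K^S(\Psi,X):=\{\alpha\in R^+:\pi_K(\alpha)\in\Psi\}\cup X$. $\mathrm{Gen}(\Phi) := \{K\subseteq S : \Phi=\inf_K^S(\Theta,Y)\text{ for some }\Theta\subseteq (R/K)^+,\ Y\subseteq R_K^+\}$. *)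

theory Defs
  imports "HOL-Analysis.Analysis"
begin

definition refl_vec :: "'a::euclidean_space \<Rightarrow> 'a \<Rightarrow> 'a" where
  "refl_vec \<beta> \<alpha> = \<alpha> - ((2 * (\<alpha> \<bullet> \<beta>)) / (\<beta> \<bullet> \<beta>)) *\<^sub>R \<beta>"

definition root_system :: "'a::euclidean_space set \<Rightarrow> bool" where
  "root_system \<Delta> \<longleftrightarrow> finite \<Delta> \<and> 0 \<notin> \<Delta> \<and>
     (\<forall>\<alpha>\<in>\<Delta>. \<forall>c::real. c *\<^sub>R \<alpha> \<in> \<Delta> \<longleftrightarrow> c = 1 \<or> c = -1) \<and>
     (\<forall>\<alpha>\<in>\<Delta>. \<forall>\<beta>\<in>\<Delta>. refl_vec \<beta> \<alpha> \<in> \<Delta>) \<and>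
     (\<forall>\<alpha>\<in>\<Delta>. \<forall>\<beta>\<in>\<Delta>. (2 * (\<alpha> \<bullet> \<beta>)) / (\<beta> \<bullet> \<beta>) \<in> \<int>)"

definition is_base :: "'a::euclidean_space set \<Rightarrow> 'a set \<Rightarrow> bool" where
  "is_base \<Delta> \<Sigma> \<longleftrightarrow> \<Sigma> \<subseteq> \<Delta> \<and> independent \<Sigma> \<and>
     (\<forall>\<alpha>\<in>\<Delta>. \<exists>c::'a \<Rightarrow> int. \<alpha> = (\<Sum>s\<in>\<Sigma>. of_int (c s) *\<^sub>R s) \<and>
        ((\<forall>s\<in>\<Sigma>. c s \<ge> 0) \<or> (\<forall>s\<in>\<Sigma>. c s \<le> 0)))"

definition perp_proj :: "'a::euclidean_space set \<Rightarrow> 'a \<Rightarrow> 'a" where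
  "perp_proj K x = (THE z. (\<forall>k\<in>span K. orthogonal z k) \<and> x - z \<in> span K)"

definition quotient_root_system :: "'a::euclidean_space set \<Rightarrow> 'a set \<Rightarrow> bool" where
  "quotient_root_system R S \<longleftrightarrow>
     (\<exists>\<Delta> \<Sigma> J0. root_system \<Delta> \<and> is_base \<Delta> \<Sigma> \<and> J0 \<subset> \<Sigma> \<and>
        R = perp_proj J0 ` \<Delta> - {0} \<and> S = perp_proj J0 ` (\<Sigma> - J0))"

definition pos_roots :: "'a::euclidean_space set \<Rightarrow> 'a set \<Rightarrow> 'a set" where
  "pos_roots R S = {r\<in>R. \<exists>c::'a \<Rightarrow> int. r = (\<Sum>s\<in>S. of_int (c s) *\<^sub>R s) \<and> (\<forall>s\<in>S. c s \<ge> 0)}"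

definition sub_pos_roots :: "'a::euclidean_space set \<Rightarrow> 'a set \<Rightarrow> 'a set \<Rightarrow> 'a set" where
  "sub_pos_roots R S K = R \<inter> span K \<inter> pos_roots R S"

definition quot_pos_roots :: "'a::euclidean_space set \<Rightarrow> 'a set \<Rightarrow> 'a set \<Rightarrow> 'a set" where
  "quot_pos_roots R S K = perp_proj K ` pos_roots R S - {0}"

definition inflation :: "'a::euclidean_space set \<Rightarrow> 'a set \<Rightarrow> 'a set \<Rightarrow> 'a set \<Rightarrow> 'a set \<Rightarrow> 'a set" where
  "inflation R S K \<Psi> X = {\<alpha>\<in>pos_roots R S. perp_proj K \<alpha> \<in> \<Psi>} \<union> X"

definition Gen :: "'a::euclidean_space set \<Rightarrow> 'a set \<Rightarrow> 'a set \<Rightarrow> 'a set set" where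
  "Gen R S \<Phi> = {K. K \<subseteq> S \<and> (\<exists>\<Theta> Y. \<Theta> \<subseteq> quot_pos_roots R S K \<and> Y \<subseteq> sub_pos_roots R S K
       \<and> \<Phi> = inflation R S K \<Theta> Y)}"

end

theory Submission
  imports Defs
begin


lemma pp_char:
  fixes K :: "'a::euclidean_space set"
  shows "(\<forall>k\<in>span K. orthogonal (perp_proj K x) k) \<and> x - perp_proj K x \<in> span K"
proof -
  obtain y z where y: "y \<in> span K" and z: "\<And>w. w \<in> span K \<Longrightarrow> orthogonal z w" and xyz: "x = y + z"
    using orthogonal_subspace_decomp_exists[of K x] by metis
  have ex: "(\<forall>k\<in>span K. orthogonal z k) \<and> x - z \<in> span K" using z y xyz by auto
  have un: "z' = z" if "(\<forall>k\<in>span K. orthogonal z' k) \<and> x - z' \<in> span K" for z'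
  proof -
    have "z - z' \<in> span K" using that ex span_diff[of "x - z'" K "x - z"] by (simp add: algebra_simps)
    hence "orthogonal z (z - z')" "orthogonal z' (z - z')" using that ex by auto
    hence "(z - z') \<bullet> (z - z') = 0" by (simp add: orthogonal_def inner_diff_left)
    thus ?thesis by simp
  qed
  have "perp_proj K x = z" unfolding perp_proj_def
    using ex un by (rule the_equality)
  thus ?thesis using ex by simp
qed

lemma pp_unique:
  fixes K :: "'a::euclidean_space set"
  assumes "\<forall>k\<in>span K. orthogonal z k" "x - z \<in> span K"
  shows "perp_proj K x = z"
proof -
  have ex: "(\<forall>k\<in>span K. orthogonal (perp_proj K x) k) \<and> x - perp_proj K x \<in> span K" by (rule pp_char)
  let ?p = "perp_proj K x"
  have "?p - z \<in> span K" using assms ex span_diff[of "x - z" K "x - ?p"] by (simp add: algebra_simps)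
  hence "orthogonal z (?p - z)" "orthogonal ?p (?p - z)" using assms ex by auto
  hence "(?p - z) \<bullet> (?p - z) = 0" by (simp add: orthogonal_def inner_diff_left)
  thus ?thesis by simp
qed

lemma pp_linear:
  fixes K :: "'a::euclidean_space set"
  shows "linear (perp_proj K)"
proof
  fix x y
  show "perp_proj K (x + y) = perp_proj K x + perp_proj K y"
    apply (rule pp_unique)
    using pp_char[of K x] pp_char[of K y]
    apply (auto simp: orthogonal_def inner_add_left)
    using span_add[of "x - perp_proj K x" K "y - perp_proj K y"] by (simp add: algebra_simps)
next
  fix c :: real and x
  show "perp_proj K (c *\<^sub>R x) = c *\<^sub>R perp_proj K x"
    apply (rule pp_unique)
    using pp_char[of K x]
    apply (auto simp: orthogonal_def)
    using span_scale[of "x - perp_proj K x" K c] by (simp add: algebra_simps)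
qed

lemma pp_zero_iff:
  fixes K :: "'a::euclidean_space set"
  shows "perp_proj K x = 0 \<longleftrightarrow> x \<in> span K"
proof
  assume "perp_proj K x = 0" thus "x \<in> span K" using pp_char[of K x] by simp
next
  assume "x \<in> span K" thus "perp_proj K x = 0" by (intro pp_unique) (auto simp: orthogonal_def)
qed

lemma pp_eq_iff:
  fixes K :: "'a::euclidean_space set"
  shows "perp_proj K x = perp_proj K y \<longleftrightarrow> x - y \<in> span K"
proof -
  have "perp_proj K (x - y) = perp_proj K x - perp_proj K y"
    using pp_linear[of K] by (simp add: linear_diff)
  thus ?thesis using pp_zero_iff[of K "x - y"] by auto
qed



lemma root_diff:
  fixes D :: "'a::euclidean_space set"
  assumes rs: "root_system D" and a: "a \<in> D" and b: "b \<in> D" and ne: "a \<noteq> b" and pos: "a \<bullet> b > 0"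
  shows "a - b \<in> D"
proof -
  have z: "0 \<notin> D" and sc: "\<And>x c. x \<in> D \<Longrightarrow> (c *\<^sub>R x \<in> D \<longleftrightarrow> c = 1 \<or> c = -1)"
    and rf: "\<And>x y. x \<in> D \<Longrightarrow> y \<in> D \<Longrightarrow> refl_vec y x \<in> D"
    and it: "\<And>x y. x \<in> D \<Longrightarrow> y \<in> D \<Longrightarrow> (2 * (x \<bullet> y)) / (y \<bullet> y) \<in> \<int>"
    using rs unfolding root_system_def by blast+
  have a0: "a \<noteq> 0" and b0: "b \<noteq> 0" using z a b by auto
  have aa: "a \<bullet> a > 0" and bb: "b \<bullet> b > 0" using a0 b0 by auto
  obtain m where m: "(2 * (a \<bullet> b)) / (b \<bullet> b) = of_int m" using it[OF a b] by (auto elim: Ints_cases)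
  obtain n where n: "(2 * (b \<bullet> a)) / (a \<bullet> a) = of_int n" using it[OF b a] by (auto elim: Ints_cases)
  have m1: "m \<ge> 1"
  proof -
    have "(2 * (a \<bullet> b)) / (b \<bullet> b) > 0" using pos bb by simp
    thus ?thesis using m by simp
  qed
  have n1: "n \<ge> 1"
  proof -
    have "(2 * (b \<bullet> a)) / (a \<bullet> a) > 0" using pos aa by (simp add: inner_commute)
    thus ?thesis using n by simp
  qed
  have lt: "(a \<bullet> b)^2 < (a \<bullet> a) * (b \<bullet> b)"
  proof (rule ccontr)
    assume "\<not> ?thesis"
    hence ge: "(a \<bullet> b)^2 \<ge> (a \<bullet> a) * (b \<bullet> b)" by simp
    define t where "t = (a \<bullet> b) / (b \<bullet> b)"
    have "(a - t *\<^sub>R b) \<bullet> (a - t *\<^sub>R b) = a \<bullet> a - 2 * t * (a \<bullet> b) + t^2 * (b \<bullet> b)"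
      by (simp add: inner_diff_left inner_diff_right inner_commute power2_eq_square algebra_simps)
    also have "\<dots> = a \<bullet> a - (a \<bullet> b)^2 / (b \<bullet> b)"
      using bb unfolding t_def by (simp add: power2_eq_square field_simps)
    also have "\<dots> \<le> 0" using ge bb by (simp add: field_simps)
    finally have "a - t *\<^sub>R b = 0" by (meson inner_ge_zero inner_eq_zero_iff order_antisym)
    hence at: "a = t *\<^sub>R b" by simp
    have "t > 0" unfolding t_def using pos bb by simp
    moreover have "t = 1 \<or> t = -1" using sc[OF b, of t] at a by simp
    ultimately have "t = 1" by auto
    thus False using at ne by simp
  qed
  have "of_int (m * n) = (2 * (a \<bullet> b)) / (b \<bullet> b) * ((2 * (b \<bullet> a)) / (a \<bullet> a))"
    using m n by simp
  also have "\<dots> = 4 * (a \<bullet> b)^2 / ((a \<bullet> a) * (b \<bullet> b))"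
    by (simp add: inner_commute power2_eq_square)
  also have "\<dots> < 4" using lt aa bb by (simp add: field_simps)
  finally have A: "real_of_int (m * n) < 4" .
  have mn4: "m * n < 4" using A by (metis of_int_less_iff of_int_numeral)
  have "m = 1 \<or> n = 1"
  proof (rule ccontr)
    assume "\<not> ?thesis"
    hence "m \<ge> 2" "n \<ge> 2" using m1 n1 by auto
    hence "m * n \<ge> 2 * 2" using mult_mono by (metis zero_le_numeral order_trans)
    thus False using mn4 by simp
  qed
  thus ?thesis
  proof
    assume "m = 1"
    hence "refl_vec b a = a - b" unfolding refl_vec_def using m pos by simp
    thus ?thesis using rf[OF a b] by simp
  next
    assume "n = 1"
    hence "refl_vec a b = b - a" unfolding refl_vec_def using n pos by (simp add: inner_commute)
    hence "b - a \<in> D" using rf[OF b a] by simp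
    hence "(-1) *\<^sub>R (b - a) \<in> D" using sc by blast
    thus ?thesis by simp
  qed
qed

lemma coeff_out:
  fixes B :: "'a::euclidean_space set"
  assumes ind: "independent B" and LB: "L \<subseteq> B" and sp: "(\<Sum>v\<in>B. d v *\<^sub>R v) \<in> span L"
    and s: "s \<in> B" "s \<notin> L"
  shows "d s = 0"
proof -
  have fB: "finite B" using ind independent_explicit by blast
  have fL: "finite L" using LB fB finite_subset by blast
  obtain e where e: "(\<Sum>v\<in>L. e v *\<^sub>R v) = (\<Sum>v\<in>B. d v *\<^sub>R v)"
    using sp span_finite[OF fL] by auto
  define w where "w v = d v - (if v \<in> L then e v else 0)" for v
  have "(\<Sum>v\<in>B. (if v \<in> L then e v else 0) *\<^sub>R v) = (\<Sum>v\<in>L. e v *\<^sub>R v)"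
  proof -
    have "(\<Sum>v\<in>B. (if v \<in> L then e v else 0) *\<^sub>R v) = (\<Sum>v\<in>B. if v \<in> L then e v *\<^sub>R v else 0)"
      by (rule sum.cong) auto
    also have "\<dots> = (\<Sum>v\<in>B \<inter> L. e v *\<^sub>R v)" using fB by (simp add: sum.inter_restrict)
    also have "B \<inter> L = L" using LB by auto
    finally show ?thesis .
  qed
  hence "(\<Sum>v\<in>B. w v *\<^sub>R v) = 0"
    unfolding w_def by (simp add: scaleR_diff_left sum_subtractf e)
  hence "w s = 0" using ind s(1) independent_explicit by blast
  thus ?thesis using s unfolding w_def by simp
qed



lemma sum_adj:
  fixes B :: "'a::euclidean_space set"
  assumes "finite B" "s \<in> B"
  shows "(\<Sum>v\<in>B. of_int (c v + (if v = s then k else 0)) *\<^sub>R v) = (\<Sum>v\<in>B. of_int (c v) *\<^sub>R v) + of_int k *\<^sub>R s"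
proof -
  have "(\<Sum>v\<in>B. of_int (c v + (if v = s then k else 0)) *\<^sub>R v)
      = (\<Sum>v\<in>B. of_int (c v) *\<^sub>R v + (if v = s then of_int k *\<^sub>R v else 0))"
    by (rule sum.cong) (auto simp: scaleR_add_left)
  also have "\<dots> = (\<Sum>v\<in>B. of_int (c v) *\<^sub>R v) + of_int k *\<^sub>R s"
    using assms by (simp add: sum.distrib)
  finally show ?thesis .
qed

lemma abs_adj:
  fixes B :: "'a set" and c :: "'a \<Rightarrow> int"
  assumes "finite B" "s \<in> B"
  shows "(\<Sum>v\<in>B. \<bar>c v + (if v = s then k else 0)\<bar>) = (\<Sum>v\<in>B. \<bar>c v\<bar>) - \<bar>c s\<bar> + \<bar>c s + k\<bar>"
proof -
  have "(\<Sum>v\<in>B. \<bar>c v + (if v = s then k else 0)\<bar>) = \<bar>c s + k\<bar> + (\<Sum>v\<in>B - {s}. \<bar>c v + (if v = s then k else 0)\<bar>)"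
    using assms by (simp add: sum.remove)
  also have "(\<Sum>v\<in>B - {s}. \<bar>c v + (if v = s then k else 0)\<bar>) = (\<Sum>v\<in>B - {s}. \<bar>c v\<bar>)"
    by (rule sum.cong) auto
  also have "(\<Sum>v\<in>B - {s}. \<bar>c v\<bar>) = (\<Sum>v\<in>B. \<bar>c v\<bar>) - \<bar>c s\<bar>"
    using assms by (simp add: sum.remove)
  finally show ?thesis by simp
qed

lemma base_facts:
  fixes D B :: "'a::euclidean_space set"
  assumes "is_base D B"
  shows "B \<subseteq> D" "independent B" "finite B"
    "\<And>x. x \<in> D \<Longrightarrow> \<exists>c::'a \<Rightarrow> int. x = (\<Sum>s\<in>B. of_int (c s) *\<^sub>R s) \<and> ((\<forall>s\<in>B. c s \<ge> 0) \<or> (\<forall>s\<in>B. c s \<le> 0))"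
  using assms unfolding is_base_def by (auto simp: independent_explicit)

lemma chain_step:
  fixes D B L :: "'a::euclidean_space set"
  assumes rs: "root_system D" and base: "is_base D B" and LB: "L \<subseteq> B"
    and a: "a \<notin> span L"
    and H: "\<And>g l. g \<in> D \<Longrightarrow> g - a \<in> span L \<Longrightarrow> l \<in> L \<Longrightarrow> g + l \<in> D \<Longrightarrow> (Q g \<longleftrightarrow> Q (g + l))"
    and x: "x \<in> D" "x - a \<in> span L" and y: "y \<in> D" "y - a \<in> span L"
    and c: "y - x = (\<Sum>s\<in>B. of_int (c s) *\<^sub>R s)"
    and pos: "y \<bullet> (y - x) > 0"
  shows "\<exists>y' c'. y' \<in> D \<and> y' - a \<in> span L \<and> (Q y \<longleftrightarrow> Q y') \<and>
     y' - x = (\<Sum>s\<in>B. of_int (c' s) *\<^sub>R s) \<and> (\<Sum>s\<in>B. \<bar>c' s\<bar>) < (\<Sum>s\<in>B. \<bar>c s\<bar>)"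
proof -
  note bf = base_facts[OF base]
  have sc: "\<And>x c. x \<in> D \<Longrightarrow> (c *\<^sub>R x \<in> D \<longleftrightarrow> c = 1 \<or> c = -1)"
    using rs unfolding root_system_def by blast
  have "y \<bullet> (y - x) = (\<Sum>s\<in>B. of_int (c s) * (y \<bullet> s))" unfolding c
    by (simp add: inner_sum_right)
  hence "0 < (\<Sum>s\<in>B. of_int (c s) * (y \<bullet> s))" using pos by simp
  then obtain s where sB: "s \<in> B" and spos: "of_int (c s) * (y \<bullet> s) > 0"
    by (metis (no_types, lifting) not_less sum_nonpos)
  have yx: "y - x \<in> span L"
    using span_diff[OF y(2) x(2)] by simp
  have cs0: "c s \<noteq> 0" using spos by auto
  have sL: "s \<in> L"
    using coeff_out[OF bf(2) LB, of "\<lambda>v. of_int (c v)" s] yx c sB cs0 by auto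
  have sspan: "s \<in> span L" using sL span_base by blast
  have yL: "y \<notin> span L"
  proof
    assume "y \<in> span L"
    hence "y - (y - a) \<in> span L" using y(2) span_diff by blast
    thus False using a by simp
  qed
  have sD: "s \<in> D" using sB bf(1) by auto
  have msD: "-s \<in> D" using sc[OF sD, of "-1"] by simp
  show ?thesis
  proof (cases "c s > 0")
    case True
    hence ys: "y \<bullet> s > 0" using spos by (simp add: zero_less_mult_iff)
    have "y \<noteq> s" using yL sspan by auto
    hence y'D: "y - s \<in> D" using root_diff[OF rs y(1) sD _ ys] by simp
    define c' where "c' v = c v + (if v = s then -1 else 0)" for v
    have e1: "y - s - x = (\<Sum>v\<in>B. of_int (c' v) *\<^sub>R v)"
      unfolding c'_def sum_adj[OF bf(3) sB] c[symmetric] by simp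
    have e2: "(\<Sum>v\<in>B. \<bar>c' v\<bar>) < (\<Sum>v\<in>B. \<bar>c v\<bar>)"
      unfolding c'_def abs_adj[OF bf(3) sB] using True by simp
    have sp: "y - s - a \<in> span L" using span_diff[OF y(2) sspan] by (simp add: algebra_simps)
    have "Q (y - s) \<longleftrightarrow> Q (y - s + s)" using H[OF y'D sp sL] y(1) by simp
    thus ?thesis using y'D sp e1 e2 by (intro exI[of _ "y - s"] exI[of _ c']) auto
  next
    case False
    hence cneg: "c s < 0" using cs0 by simp
    hence ys: "y \<bullet> (-s) > 0" using spos by (simp add: zero_less_mult_iff)
    have "y \<noteq> -s" using yL sspan span_neg by fastforce
    hence y'D: "y + s \<in> D" using root_diff[OF rs y(1) msD _ ys] by simp
    define c' where "c' v = c v + (if v = s then 1 else 0)" for v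
    have e1: "y + s - x = (\<Sum>v\<in>B. of_int (c' v) *\<^sub>R v)"
      unfolding c'_def sum_adj[OF bf(3) sB] c[symmetric] by simp
    have e2: "(\<Sum>v\<in>B. \<bar>c' v\<bar>) < (\<Sum>v\<in>B. \<bar>c v\<bar>)"
      unfolding c'_def abs_adj[OF bf(3) sB] using cneg by simp
    have sp: "y + s - a \<in> span L" using span_add[OF y(2) sspan] by (simp add: algebra_simps)
    have "Q y \<longleftrightarrow> Q (y + s)" using H[OF y(1) y(2) sL y'D] by simp
    thus ?thesis using y'D sp e1 e2 by (intro exI[of _ "y + s"] exI[of _ c']) auto
  qed
qed


lemma chain:
  fixes D B L :: "'a::euclidean_space set"
  assumes rs: "root_system D" and base: "is_base D B" and LB: "L \<subseteq> B"
    and a: "a \<notin> span L"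
    and H: "\<And>g l. g \<in> D \<Longrightarrow> g - a \<in> span L \<Longrightarrow> l \<in> L \<Longrightarrow> g + l \<in> D \<Longrightarrow> (Q g \<longleftrightarrow> Q (g + l))"
    and x: "x \<in> D" "x - a \<in> span L" and y: "y \<in> D" "y - a \<in> span L"
  shows "Q x \<longleftrightarrow> Q y"
proof -
  note bf = base_facts[OF base]
  have core: "\<And>x y c. x \<in> D \<Longrightarrow> x - a \<in> span L \<Longrightarrow> y \<in> D \<Longrightarrow> y - a \<in> span L \<Longrightarrow>
      y - x = (\<Sum>s\<in>B. of_int (c s) *\<^sub>R s) \<Longrightarrow> nat (\<Sum>s\<in>B. \<bar>c s\<bar>) = n \<Longrightarrow> (Q x \<longleftrightarrow> Q y)" for n
  proof (induction n rule: less_induct)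
    case (less n x y c)
    show ?case
    proof (cases "y = x")
      case True thus ?thesis by simp
    next
      case False
      hence "0 < (y - x) \<bullet> (y - x)" by simp
      hence "y \<bullet> (y - x) > 0 \<or> x \<bullet> (x - y) > 0"
        by (smt (verit) inner_diff_left inner_commute inner_diff_right)
      thus ?thesis
      proof
        assume p: "y \<bullet> (y - x) > 0"
        obtain y' c' where h: "y' \<in> D" "y' - a \<in> span L" "Q y \<longleftrightarrow> Q y'"
          "y' - x = (\<Sum>s\<in>B. of_int (c' s) *\<^sub>R s)" "(\<Sum>s\<in>B. \<bar>c' s\<bar>) < (\<Sum>s\<in>B. \<bar>c s\<bar>)"
          using chain_step[OF rs base LB a H less.prems(1,2,3,4,5) p] by blast
        have "nat (\<Sum>s\<in>B. \<bar>c' s\<bar>) < n"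
        proof -
          have nn: "0 \<le> (\<Sum>s\<in>B. \<bar>c' s\<bar>)" by (simp add: sum_nonneg)
          hence "0 < (\<Sum>s\<in>B. \<bar>c s\<bar>)" using h(5) by linarith
          thus ?thesis using h(5) less.prems(6) by (auto simp: zless_nat_conj)
        qed
        hence "Q x \<longleftrightarrow> Q y'" using less.IH[OF _ less.prems(1,2) h(1,2,4) refl] by blast
        thus ?thesis using h(3) by simp
      next
        assume p: "x \<bullet> (x - y) > 0"
        have cm: "x - y = (\<Sum>s\<in>B. of_int (- c s) *\<^sub>R s)"
          using less.prems(5) by (simp add: sum_negf[symmetric] algebra_simps)
        obtain x' c' where h: "x' \<in> D" "x' - a \<in> span L" "Q x \<longleftrightarrow> Q x'"
          "x' - y = (\<Sum>s\<in>B. of_int (c' s) *\<^sub>R s)" "(\<Sum>s\<in>B. \<bar>c' s\<bar>) < (\<Sum>s\<in>B. \<bar>- c s\<bar>)"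
          using chain_step[OF rs base LB a H less.prems(3,4,1,2) cm p] by blast
        have h5: "(\<Sum>s\<in>B. \<bar>c' s\<bar>) < (\<Sum>s\<in>B. \<bar>c s\<bar>)" using h(5) by simp
        have "nat (\<Sum>s\<in>B. \<bar>c' s\<bar>) < n"
        proof -
          have nn: "0 \<le> (\<Sum>s\<in>B. \<bar>c' s\<bar>)" by (simp add: sum_nonneg)
          hence "0 < (\<Sum>s\<in>B. \<bar>c s\<bar>)" using h5 by linarith
          thus ?thesis using h5 less.prems(6) by (auto simp: zless_nat_conj)
        qed
        hence "Q y \<longleftrightarrow> Q x'" using less.IH[OF _ less.prems(3,4) h(1,2,4) refl] by blast
        thus ?thesis using h(3) by simp
      qed
    qed
  qed
  obtain cx where cx: "x = (\<Sum>s\<in>B. of_int (cx s) *\<^sub>R s)" using bf(4)[OF x(1)] by blast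
  obtain cy where cy: "y = (\<Sum>s\<in>B. of_int (cy s) *\<^sub>R s)" using bf(4)[OF y(1)] by blast
  have "y - x = (\<Sum>s\<in>B. of_int (cy s - cx s) *\<^sub>R s)"
    unfolding cx cy by (simp add: sum_subtractf scaleR_diff_left)
  thus ?thesis by (rule core[OF x y _ refl])
qed



lemma proj_sum:
  fixes B J0 :: "'a::euclidean_space set"
  assumes fB: "finite B" and J0B: "J0 \<subseteq> B"
  shows "perp_proj J0 (\<Sum>s\<in>B. u s *\<^sub>R s) = (\<Sum>s\<in>B - J0. u s *\<^sub>R perp_proj J0 s)"
proof -
  have lin: "linear (perp_proj J0)" by (rule pp_linear)
  have "perp_proj J0 (\<Sum>s\<in>B. u s *\<^sub>R s) = (\<Sum>s\<in>B. u s *\<^sub>R perp_proj J0 s)"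
    by (simp add: linear_sum[OF lin] linear_scale[OF lin])
  also have "\<dots> = (\<Sum>s\<in>B - J0. u s *\<^sub>R perp_proj J0 s)"
    using fB pp_zero_iff[of J0] span_base by (intro sum.mono_neutral_right) auto
  finally show ?thesis .
qed

lemma indep_proj:
  fixes B J0 :: "'a::euclidean_space set"
  assumes ind: "independent B" and J0B: "J0 \<subseteq> B"
    and z: "(\<Sum>v\<in>B - J0. u v *\<^sub>R perp_proj J0 v) = 0" and s: "s \<in> B - J0"
  shows "u s = 0"
proof -
  have fB: "finite B" using ind independent_explicit by blast
  define u' where "u' v = (if v \<in> J0 then 0 else u v)" for v
  have "(\<Sum>v\<in>B - J0. u v *\<^sub>R perp_proj J0 v) = (\<Sum>v\<in>B - J0. u' v *\<^sub>R perp_proj J0 v)"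
    by (rule sum.cong) (auto simp: u'_def)
  also have "\<dots> = perp_proj J0 (\<Sum>v\<in>B. u' v *\<^sub>R v)" using proj_sum[OF fB J0B] by simp
  finally have "perp_proj J0 (\<Sum>v\<in>B. u' v *\<^sub>R v) = 0" using z by simp
  hence "(\<Sum>v\<in>B. u' v *\<^sub>R v) \<in> span J0" using pp_zero_iff by blast
  hence "u' s = 0" using coeff_out[OF ind J0B] s by blast
  thus ?thesis using s by (simp add: u'_def)
qed

lemma proj_inj:
  fixes B J0 :: "'a::euclidean_space set"
  assumes ind: "independent B" and J0B: "J0 \<subseteq> B"
  shows "inj_on (perp_proj J0) (B - J0)"
proof (rule inj_onI, rule ccontr)
  fix s s' assume s: "s \<in> B - J0" and s': "s' \<in> B - J0" and eq: "perp_proj J0 s = perp_proj J0 s'"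
    and ne: "s \<noteq> s'"
  have fB: "finite B" using ind independent_explicit by blast
  define u where "u v = (if v = s then 1 else if v = s' then -1 else (0::real))" for v
  have "(\<Sum>v\<in>B - J0. u v *\<^sub>R perp_proj J0 v)
      = (\<Sum>v\<in>B - J0. (if v = s then perp_proj J0 v else 0) - (if v = s' then perp_proj J0 v else 0))"
    by (rule sum.cong) (auto simp: u_def ne)
  also have "\<dots> = perp_proj J0 s - perp_proj J0 s'"
    using s s' fB by (simp add: sum_subtractf)
  finally have "(\<Sum>v\<in>B - J0. u v *\<^sub>R perp_proj J0 v) = 0" using eq by simp
  hence "u s = 0" using indep_proj[OF ind J0B _ s] by blast
  thus False by (simp add: u_def)
qed

lemma transfer:
  fixes B J0 K :: "'a::euclidean_space set"
  assumes KS: "K \<subseteq> perp_proj J0 ` (B - J0)"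
  shows "perp_proj J0 x \<in> span K \<longleftrightarrow> x \<in> span ({s\<in>B - J0. perp_proj J0 s \<in> K} \<union> J0)"
proof -
  have lin: "linear (perp_proj J0)" by (rule pp_linear)
  define L' where "L' = {s\<in>B - J0. perp_proj J0 s \<in> K}"
  have KL: "K = perp_proj J0 ` L'" using KS unfolding L'_def by auto
  show ?thesis
  proof
    assume "perp_proj J0 x \<in> span K"
    hence "perp_proj J0 x \<in> perp_proj J0 ` span L'" unfolding KL span_linear_image[OF lin] .
    then obtain y where y: "y \<in> span L'" "perp_proj J0 x = perp_proj J0 y" by auto
    hence xy: "x - y \<in> span J0" using pp_eq_iff by blast
    have "y \<in> span (L' \<union> J0)" using y(1) span_mono[of L' "L' \<union> J0"] by auto
    moreover have "x - y \<in> span (L' \<union> J0)" using xy span_mono[of J0 "L' \<union> J0"] by auto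
    ultimately have "y + (x - y) \<in> span (L' \<union> J0)" by (rule span_add)
    thus "x \<in> span ({s\<in>B - J0. perp_proj J0 s \<in> K} \<union> J0)" unfolding L'_def by simp
  next
    assume "x \<in> span ({s\<in>B - J0. perp_proj J0 s \<in> K} \<union> J0)"
    hence "perp_proj J0 x \<in> perp_proj J0 ` span (L' \<union> J0)" unfolding L'_def by auto
    hence "perp_proj J0 x \<in> span (perp_proj J0 ` (L' \<union> J0))" unfolding span_linear_image[OF lin] .
    moreover have "perp_proj J0 ` (L' \<union> J0) \<subseteq> insert 0 K"
      using pp_zero_iff[of J0] span_base unfolding L'_def by fastforce
    ultimately show "perp_proj J0 x \<in> span K"
      using span_mono[of "perp_proj J0 ` (L' \<union> J0)" "insert 0 K"] by auto
  qed
qed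

lemma span_inter_base:
  fixes B :: "'a::euclidean_space set"
  assumes ind: "independent B" and A1: "A1 \<subseteq> B" and A2: "A2 \<subseteq> B"
    and x1: "x \<in> span A1" and x2: "x \<in> span A2"
  shows "x \<in> span (A1 \<inter> A2)"
proof -
  have fB: "finite B" using ind independent_explicit by blast
  have fA: "finite A1" using A1 fB finite_subset by blast
  obtain e where e: "x = (\<Sum>v\<in>A1. e v *\<^sub>R v)" using x1 span_finite[OF fA] by auto
  define e' where "e' v = (if v \<in> A1 then e v else 0)" for v
  have "(\<Sum>v\<in>B. e' v *\<^sub>R v) = (\<Sum>v\<in>B. if v \<in> A1 then e v *\<^sub>R v else 0)"
    by (rule sum.cong) (auto simp: e'_def)
  also have "\<dots> = (\<Sum>v\<in>B \<inter> A1. e v *\<^sub>R v)" using fB by (simp add: sum.inter_restrict)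
  also have "B \<inter> A1 = A1" using A1 by auto
  finally have xe: "x = (\<Sum>v\<in>B. e' v *\<^sub>R v)" using e by simp
  have z: "\<And>v. v \<in> B \<Longrightarrow> v \<notin> A2 \<Longrightarrow> e' v = 0"
    using coeff_out[OF ind A2, of e'] xe x2 by auto
  have "(\<Sum>v\<in>B. e' v *\<^sub>R v) \<in> span (A1 \<inter> A2)"
  proof (rule span_sum)
    fix v assume v: "v \<in> B"
    show "e' v *\<^sub>R v \<in> span (A1 \<inter> A2)"
    proof (cases "v \<in> A1 \<inter> A2")
      case True thus ?thesis by (intro span_scale span_base)
    next
      case False
      have "e' v = 0"
      proof (cases "v \<in> A2")
        case True thus ?thesis using False by (simp add: e'_def)
      next
        case False thus ?thesis using z v by blast
      qed
      thus ?thesis by (simp add: span_zero)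
    qed
  qed
  thus ?thesis using xe by simp
qed



lemma proj_pos:
  fixes B J0 D :: "'a::euclidean_space set"
  assumes ind: "independent B" and J0B: "J0 \<subseteq> B"
    and xc: "x = (\<Sum>s\<in>B. of_int (c s) *\<^sub>R s)" and cpos: "\<forall>s\<in>B. c s \<ge> 0"
    and xD: "x \<in> D" and nz: "perp_proj J0 x \<noteq> 0"
  shows "perp_proj J0 x \<in> pos_roots (perp_proj J0 ` D - {0}) (perp_proj J0 ` (B - J0))"
proof -
  have fB: "finite B" using ind independent_explicit by blast
  have inj: "inj_on (perp_proj J0) (B - J0)" by (rule proj_inj[OF ind J0B])
  define c' where "c' t = c (inv_into (B - J0) (perp_proj J0) t)" for t
  have "perp_proj J0 x = (\<Sum>s\<in>B - J0. of_int (c s) *\<^sub>R perp_proj J0 s)"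
    unfolding xc by (rule proj_sum[OF fB J0B])
  also have "\<dots> = (\<Sum>s\<in>B - J0. of_int (c' (perp_proj J0 s)) *\<^sub>R perp_proj J0 s)"
    by (rule sum.cong) (auto simp: c'_def inv_into_f_f[OF inj])
  also have "\<dots> = (\<Sum>t\<in>perp_proj J0 ` (B - J0). of_int (c' t) *\<^sub>R t)"
    by (simp add: sum.reindex[OF inj])
  finally have e: "perp_proj J0 x = (\<Sum>t\<in>perp_proj J0 ` (B - J0). of_int (c' t) *\<^sub>R t)" .
  have "\<forall>t\<in>perp_proj J0 ` (B - J0). c' t \<ge> 0"
    using cpos inv_into_into[of _ "perp_proj J0" "B - J0"] unfolding c'_def by blast
  thus ?thesis unfolding pos_roots_def using e xD nz by blast
qed

lemma lift:
  fixes B J0 D :: "'a::euclidean_space set"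
  assumes base: "is_base D B" and J0B: "J0 \<subseteq> B"
    and al: "\<alpha> \<in> pos_roots (perp_proj J0 ` D - {0}) (perp_proj J0 ` (B - J0))"
  shows "\<exists>x\<in>D. perp_proj J0 x = \<alpha> \<and> (\<exists>c. x = (\<Sum>s\<in>B. of_int (c s) *\<^sub>R s) \<and> (\<forall>s\<in>B. c s \<ge> 0))"
proof -
  note bf = base_facts[OF base]
  have inj: "inj_on (perp_proj J0) (B - J0)" by (rule proj_inj[OF bf(2) J0B])
  obtain x where xD: "x \<in> D" and ax: "\<alpha> = perp_proj J0 x" and a0: "\<alpha> \<noteq> 0"
    using al unfolding pos_roots_def by auto
  obtain d where d: "\<alpha> = (\<Sum>t\<in>perp_proj J0 ` (B - J0). of_int (d t) *\<^sub>R t)"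
    and dpos: "\<forall>t\<in>perp_proj J0 ` (B - J0). d t \<ge> 0"
    using al unfolding pos_roots_def by auto
  obtain c where xc: "x = (\<Sum>s\<in>B. of_int (c s) *\<^sub>R s)"
    and cs: "(\<forall>s\<in>B. c s \<ge> 0) \<or> (\<forall>s\<in>B. c s \<le> 0)"
    using bf(4)[OF xD] by blast
  show ?thesis
  proof (cases "\<forall>s\<in>B. c s \<ge> 0")
    case True thus ?thesis using xD ax xc by blast
  next
    case False
    hence cneg: "\<forall>s\<in>B. c s \<le> 0" using cs by blast
    have e1: "\<alpha> = (\<Sum>s\<in>B - J0. of_int (c s) *\<^sub>R perp_proj J0 s)"
      unfolding ax xc by (rule proj_sum[OF bf(3) J0B])
    have e2: "\<alpha> = (\<Sum>s\<in>B - J0. of_int (d (perp_proj J0 s)) *\<^sub>R perp_proj J0 s)"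
      unfolding d by (simp add: sum.reindex[OF inj])
    have "(\<Sum>s\<in>B - J0. (of_int (d (perp_proj J0 s)) - of_int (c s)) *\<^sub>R perp_proj J0 s) = 0"
      using e1 e2 by (simp add: scaleR_diff_left sum_subtractf)
    hence eq: "of_int (d (perp_proj J0 s)) - of_int (c s) = (0::real)" if s: "s \<in> B - J0" for s
      using indep_proj[OF bf(2) J0B _ s, where u="\<lambda>s. real_of_int (d (perp_proj J0 s)) - real_of_int (c s)"]
      by simp
    have "\<And>s. s \<in> B - J0 \<Longrightarrow> c s = 0"
    proof -
      fix s assume s: "s \<in> B - J0"
      have "d (perp_proj J0 s) = c s" using eq[OF s] by simp
      moreover have "d (perp_proj J0 s) \<ge> 0" using dpos s by blast
      moreover have "c s \<le> 0" using cneg s by blast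
      ultimately show "c s = 0" by simp
    qed
    hence "\<alpha> = 0" unfolding e1 by simp
    thus ?thesis using a0 by simp
  qed
qed

lemma pos_level:
  fixes B L D :: "'a::euclidean_space set"
  assumes base: "is_base D B" and LB: "L \<subseteq> B"
    and ac: "a = (\<Sum>s\<in>B. of_int (ca s) *\<^sub>R s)" and capos: "\<forall>s\<in>B. ca s \<ge> 0"
    and aL: "a \<notin> span L" and gD: "g \<in> D" and ga: "g - a \<in> span L"
  shows "\<exists>c. g = (\<Sum>s\<in>B. of_int (c s) *\<^sub>R s) \<and> (\<forall>s\<in>B. c s \<ge> 0)"
proof -
  note bf = base_facts[OF base]
  obtain cg where gc: "g = (\<Sum>s\<in>B. of_int (cg s) *\<^sub>R s)"
    and cs: "(\<forall>s\<in>B. cg s \<ge> 0) \<or> (\<forall>s\<in>B. cg s \<le> 0)"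
    using bf(4)[OF gD] by blast
  show ?thesis
  proof (cases "\<forall>s\<in>B. cg s \<ge> 0")
    case True thus ?thesis using gc by blast
  next
    case False
    hence cneg: "\<forall>s\<in>B. cg s \<le> 0" using cs by blast
    have "a - g \<in> span L" using span_neg[OF ga] by simp
    moreover have "a - g = (\<Sum>s\<in>B. (of_int (ca s) - of_int (cg s)) *\<^sub>R s)"
      unfolding ac gc by (simp add: scaleR_diff_left sum_subtractf)
    ultimately have z: "\<And>s. s \<in> B \<Longrightarrow> s \<notin> L \<Longrightarrow> of_int (ca s) - of_int (cg s) = (0::real)"
      using coeff_out[OF bf(2) LB] by metis
    have "a \<in> span L" unfolding ac
    proof (rule span_sum)
      fix s assume s: "s \<in> B"
      show "of_int (ca s) *\<^sub>R s \<in> span L"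
      proof (cases "s \<in> L")
        case True thus ?thesis by (intro span_scale span_base)
      next
        case False
        have "ca s = cg s" using z[OF s False] by simp
        hence "ca s = 0" using capos cneg s by force
        thus ?thesis by (simp add: span_zero)
      qed
    qed
    thus ?thesis using aL by simp
  qed
qed

lemma gen_char:
  fixes R S \<Phi> K :: "'a::euclidean_space set"
  assumes Phi: "\<Phi> \<subseteq> pos_roots R S"
  shows "K \<in> Gen R S \<Phi> \<longleftrightarrow> K \<subseteq> S \<and> (\<forall>\<alpha>\<in>pos_roots R S. \<forall>\<beta>\<in>pos_roots R S.
            \<alpha> \<notin> span K \<longrightarrow> \<alpha> - \<beta> \<in> span K \<longrightarrow> (\<alpha> \<in> \<Phi> \<longleftrightarrow> \<beta> \<in> \<Phi>))"
proof
  assume "K \<in> Gen R S \<Phi>"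
  then obtain \<Theta> Y where KS: "K \<subseteq> S" and Th: "\<Theta> \<subseteq> quot_pos_roots R S K"
    and Y: "Y \<subseteq> sub_pos_roots R S K" and eq: "\<Phi> = inflation R S K \<Theta> Y"
    unfolding Gen_def by blast
  have Yspan: "Y \<subseteq> span K" using Y unfolding sub_pos_roots_def by auto
  have mem: "\<alpha> \<in> \<Phi> \<longleftrightarrow> perp_proj K \<alpha> \<in> \<Theta>" if "\<alpha> \<in> pos_roots R S" "\<alpha> \<notin> span K" for \<alpha>
    using that Yspan unfolding eq inflation_def by auto
  show "K \<subseteq> S \<and> (\<forall>\<alpha>\<in>pos_roots R S. \<forall>\<beta>\<in>pos_roots R S.
            \<alpha> \<notin> span K \<longrightarrow> \<alpha> - \<beta> \<in> span K \<longrightarrow> (\<alpha> \<in> \<Phi> \<longleftrightarrow> \<beta> \<in> \<Phi>))"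
  proof (intro conjI KS ballI impI)
    fix \<alpha> \<beta> assume a: "\<alpha> \<in> pos_roots R S" and b: "\<beta> \<in> pos_roots R S"
      and aK: "\<alpha> \<notin> span K" and ab: "\<alpha> - \<beta> \<in> span K"
    have pe: "perp_proj K \<alpha> = perp_proj K \<beta>" using ab pp_eq_iff by blast
    have bK: "\<beta> \<notin> span K"
    proof
      assume "\<beta> \<in> span K"
      hence "(\<alpha> - \<beta>) + \<beta> \<in> span K" using ab span_add by blast
      thus False using aK by simp
    qed
    show "\<alpha> \<in> \<Phi> \<longleftrightarrow> \<beta> \<in> \<Phi>" using mem[OF a aK] mem[OF b bK] pe by simp
  qed
next
  assume "K \<subseteq> S \<and> (\<forall>\<alpha>\<in>pos_roots R S. \<forall>\<beta>\<in>pos_roots R S.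
            \<alpha> \<notin> span K \<longrightarrow> \<alpha> - \<beta> \<in> span K \<longrightarrow> (\<alpha> \<in> \<Phi> \<longleftrightarrow> \<beta> \<in> \<Phi>))"
  hence KS: "K \<subseteq> S" and P: "\<And>\<alpha> \<beta>. \<alpha> \<in> pos_roots R S \<Longrightarrow> \<beta> \<in> pos_roots R S \<Longrightarrow>
            \<alpha> \<notin> span K \<Longrightarrow> \<alpha> - \<beta> \<in> span K \<Longrightarrow> (\<alpha> \<in> \<Phi> \<longleftrightarrow> \<beta> \<in> \<Phi>)" by auto
  define \<Theta> where "\<Theta> = perp_proj K ` \<Phi> - {0}"
  define Y where "Y = \<Phi> \<inter> span K"
  have "\<Theta> \<subseteq> quot_pos_roots R S K" using Phi unfolding \<Theta>_def quot_pos_roots_def by auto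
  moreover have "Y \<subseteq> sub_pos_roots R S K"
    using Phi unfolding Y_def sub_pos_roots_def pos_roots_def by auto
  moreover have "\<Phi> = inflation R S K \<Theta> Y"
  proof
    show "\<Phi> \<subseteq> inflation R S K \<Theta> Y"
    proof
      fix \<phi> assume ph: "\<phi> \<in> \<Phi>"
      show "\<phi> \<in> inflation R S K \<Theta> Y"
      proof (cases "\<phi> \<in> span K")
        case True thus ?thesis using ph unfolding inflation_def Y_def by auto
      next
        case False
        hence "perp_proj K \<phi> \<noteq> 0" using pp_zero_iff by blast
        thus ?thesis using ph Phi unfolding inflation_def \<Theta>_def by auto
      qed
    qed
  next
    show "inflation R S K \<Theta> Y \<subseteq> \<Phi>"
    proof
      fix \<alpha> assume "\<alpha> \<in> inflation R S K \<Theta> Y"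
      hence "\<alpha> \<in> Y \<or> (\<alpha> \<in> pos_roots R S \<and> perp_proj K \<alpha> \<in> \<Theta>)" unfolding inflation_def by auto
      thus "\<alpha> \<in> \<Phi>"
      proof
        assume "\<alpha> \<in> Y" thus ?thesis unfolding Y_def by auto
      next
        assume h: "\<alpha> \<in> pos_roots R S \<and> perp_proj K \<alpha> \<in> \<Theta>"
        then obtain \<phi> where ph: "\<phi> \<in> \<Phi>" "perp_proj K \<alpha> = perp_proj K \<phi>" "perp_proj K \<alpha> \<noteq> 0"
          unfolding \<Theta>_def by auto
        have "\<alpha> \<notin> span K" using ph(3) pp_zero_iff by blast
        moreover have "\<alpha> - \<phi> \<in> span K" using ph(2) pp_eq_iff by blast
        ultimately show ?thesis using P[of \<alpha> \<phi>] h ph(1) Phi by auto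
      qed
    qed
  qed
  ultimately show "K \<in> Gen R S \<Phi>" unfolding Gen_def using KS by blast
qed



theorem proposition3p11:
  fixes R S \<Phi> I J :: "'a::euclidean_space set"
  assumes "quotient_root_system R S"
    and "\<Phi> \<subseteq> pos_roots R S"
    and "I \<in> Gen R S \<Phi>" and "J \<in> Gen R S \<Phi>"
  shows "I \<union> J \<in> Gen R S \<Phi> \<and> I \<inter> J \<in> Gen R S \<Phi>"
proof -
  obtain D B J0 where rs: "root_system D" and base: "is_base D B" and J0B': "J0 \<subset> B"
    and hR: "R = perp_proj J0 ` D - {0}" and hS: "S = perp_proj J0 ` (B - J0)"
    using assms(1) unfolding quotient_root_system_def by blast
  note bf = base_facts[OF base]
  have J0B: "J0 \<subseteq> B" using J0B' by auto
  have Phi: "\<Phi> \<subseteq> pos_roots R S" by (rule assms(2))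
  have IS: "I \<subseteq> S" and PI: "\<And>\<alpha> \<beta>. \<alpha> \<in> pos_roots R S \<Longrightarrow> \<beta> \<in> pos_roots R S \<Longrightarrow>
            \<alpha> \<notin> span I \<Longrightarrow> \<alpha> - \<beta> \<in> span I \<Longrightarrow> (\<alpha> \<in> \<Phi> \<longleftrightarrow> \<beta> \<in> \<Phi>)"
    using assms(3) gen_char[OF Phi, of I] by auto
  have JS: "J \<subseteq> S" and PJ: "\<And>\<alpha> \<beta>. \<alpha> \<in> pos_roots R S \<Longrightarrow> \<beta> \<in> pos_roots R S \<Longrightarrow>
            \<alpha> \<notin> span J \<Longrightarrow> \<alpha> - \<beta> \<in> span J \<Longrightarrow> (\<alpha> \<in> \<Phi> \<longleftrightarrow> \<beta> \<in> \<Phi>)"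
    using assms(4) gen_char[OF Phi, of J] by auto
  have lin: "linear (perp_proj J0)" by (rule pp_linear)
  define LK where "LK K = {s\<in>B - J0. perp_proj J0 s \<in> K} \<union> J0" for K
  have LKB: "LK K \<subseteq> B" for K unfolding LK_def using J0B by auto
  have tr: "K \<subseteq> S \<Longrightarrow> perp_proj J0 x \<in> span K \<longleftrightarrow> x \<in> span (LK K)" for K x
    unfolding LK_def hS by (rule transfer)
  have posR: "pos_roots R S \<subseteq> R" unfolding pos_roots_def by auto
  have union: "I \<union> J \<in> Gen R S \<Phi>"
  proof -
    have KS: "I \<union> J \<subseteq> S" using IS JS by auto
    have "\<forall>\<alpha>\<in>pos_roots R S. \<forall>\<beta>\<in>pos_roots R S.
            \<alpha> \<notin> span (I \<union> J) \<longrightarrow> \<alpha> - \<beta> \<in> span (I \<union> J) \<longrightarrow> (\<alpha> \<in> \<Phi> \<longleftrightarrow> \<beta> \<in> \<Phi>)"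
    proof (intro ballI impI)
      fix \<alpha> \<beta> assume al: "\<alpha> \<in> pos_roots R S" and be: "\<beta> \<in> pos_roots R S"
        and aK: "\<alpha> \<notin> span (I \<union> J)" and abK: "\<alpha> - \<beta> \<in> span (I \<union> J)"
      obtain a ca where aD: "a \<in> D" and pa: "perp_proj J0 a = \<alpha>"
        and ac: "a = (\<Sum>s\<in>B. of_int (ca s) *\<^sub>R s)" and capos: "\<forall>s\<in>B. ca s \<ge> 0"
        using lift[OF base J0B, of \<alpha>] al hR hS by auto
      obtain b where bD: "b \<in> D" and pb: "perp_proj J0 b = \<beta>"
        using lift[OF base J0B, of \<beta>] be hR hS by auto
      define L where "L = LK (I \<union> J)"
      have LB: "L \<subseteq> B" unfolding L_def by (rule LKB)
      have aL: "a \<notin> span L" using tr[OF KS, of a] aK pa unfolding L_def by simp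
      have "perp_proj J0 (b - a) = - (\<alpha> - \<beta>)" using pa pb linear_diff[OF lin] by simp
      hence "perp_proj J0 (b - a) \<in> span (I \<union> J)" using abK span_neg by metis
      hence ba: "b - a \<in> span L" using tr[OF KS] unfolding L_def by blast
      define Q where "Q g = (perp_proj J0 g \<in> \<Phi>)" for g
      have H: "Q g \<longleftrightarrow> Q (g + l)" if gD: "g \<in> D" and ga: "g - a \<in> span L" and lL: "l \<in> L"
        and glD: "g + l \<in> D" for g l
      proof -
        have lspan: "l \<in> span L" using lL span_base by blast
        have gla: "g + l - a \<in> span L" using span_add[OF ga lspan] by (simp add: algebra_simps)
        have notL: "h \<notin> span L" if "h - a \<in> span L" for h
        proof
          assume "h \<in> span L"
          hence "h - (h - a) \<in> span L" using that span_diff by blast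
          thus False using aL by simp
        qed
        have g1: "perp_proj J0 g \<notin> span (I \<union> J)" using notL[OF ga] tr[OF KS] unfolding L_def by blast
        have g2: "perp_proj J0 (g + l) \<notin> span (I \<union> J)" using notL[OF gla] tr[OF KS] unfolding L_def by blast
        have gpos: "perp_proj J0 g \<in> pos_roots R S"
        proof -
          obtain c where "g = (\<Sum>s\<in>B. of_int (c s) *\<^sub>R s)" "\<forall>s\<in>B. c s \<ge> 0"
            using pos_level[OF base LB ac capos aL gD ga] by blast
          moreover have "perp_proj J0 g \<noteq> 0" using g1 span_zero by metis
          ultimately show ?thesis using proj_pos[OF bf(2) J0B _ _ gD] hR hS by simp
        qed
        have glpos: "perp_proj J0 (g + l) \<in> pos_roots R S"
        proof -
          obtain c where "g + l = (\<Sum>s\<in>B. of_int (c s) *\<^sub>R s)" "\<forall>s\<in>B. c s \<ge> 0"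
            using pos_level[OF base LB ac capos aL glD gla] by blast
          moreover have "perp_proj J0 (g + l) \<noteq> 0" using g2 span_zero by metis
          ultimately show ?thesis using proj_pos[OF bf(2) J0B _ _ glD] hR hS by simp
        qed
        have add: "perp_proj J0 (g + l) = perp_proj J0 g + perp_proj J0 l" using linear_add[OF lin] by simp
        have dif: "perp_proj J0 g - perp_proj J0 (g + l) = - perp_proj J0 l" using add by simp
        show ?thesis
        proof (cases "l \<in> J0")
          case True
          hence "perp_proj J0 l = 0" using pp_zero_iff span_base by blast
          thus ?thesis unfolding Q_def using add by simp
        next
          case False
          hence lIJ: "perp_proj J0 l \<in> I \<or> perp_proj J0 l \<in> J" using lL unfolding L_def LK_def by auto
          thus ?thesis
          proof
            assume lI: "perp_proj J0 l \<in> I"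
            have "perp_proj J0 g \<notin> span I" using g1 span_mono[of I "I \<union> J"] by blast
            moreover have "perp_proj J0 g - perp_proj J0 (g + l) \<in> span I"
              unfolding dif using lI span_base span_neg by blast
            ultimately show ?thesis unfolding Q_def using PI[OF gpos glpos] by blast
          next
            assume lJ: "perp_proj J0 l \<in> J"
            have "perp_proj J0 g \<notin> span J" using g1 span_mono[of J "I \<union> J"] by blast
            moreover have "perp_proj J0 g - perp_proj J0 (g + l) \<in> span J"
              unfolding dif using lJ span_base span_neg by blast
            ultimately show ?thesis unfolding Q_def using PJ[OF gpos glpos] by blast
          qed
        qed
      qed
      have "Q a \<longleftrightarrow> Q b"
        by (rule chain[OF rs base LB aL H aD _ bD ba]) (auto simp: span_zero)
      thus "\<alpha> \<in> \<Phi> \<longleftrightarrow> \<beta> \<in> \<Phi>" unfolding Q_def using pa pb by simp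
    qed
    thus ?thesis using gen_char[OF Phi, of "I \<union> J"] KS by blast
  qed
  have inter: "I \<inter> J \<in> Gen R S \<Phi>"
  proof -
    have KS: "I \<inter> J \<subseteq> S" using IS by auto
    have "\<forall>\<alpha>\<in>pos_roots R S. \<forall>\<beta>\<in>pos_roots R S.
            \<alpha> \<notin> span (I \<inter> J) \<longrightarrow> \<alpha> - \<beta> \<in> span (I \<inter> J) \<longrightarrow> (\<alpha> \<in> \<Phi> \<longleftrightarrow> \<beta> \<in> \<Phi>)"
    proof (intro ballI impI)
      fix \<alpha> \<beta> assume al: "\<alpha> \<in> pos_roots R S" and be: "\<beta> \<in> pos_roots R S"
        and aK: "\<alpha> \<notin> span (I \<inter> J)" and abK: "\<alpha> - \<beta> \<in> span (I \<inter> J)"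
      have abI: "\<alpha> - \<beta> \<in> span I" using abK span_mono[of "I \<inter> J" I] by blast
      have abJ: "\<alpha> - \<beta> \<in> span J" using abK span_mono[of "I \<inter> J" J] by blast
      show "\<alpha> \<in> \<Phi> \<longleftrightarrow> \<beta> \<in> \<Phi>"
      proof (cases "\<alpha> \<in> span I")
        case False thus ?thesis using PI[OF al be _ abI] by blast
      next
        case aI: True
        show ?thesis
        proof (cases "\<alpha> \<in> span J")
          case False thus ?thesis using PJ[OF al be _ abJ] by blast
        next
          case aJ: True
          obtain a where pa: "\<alpha> = perp_proj J0 a" using al posR hR by auto
          have "a \<in> span (LK I)" using tr[OF IS] aI pa by blast
          moreover have "a \<in> span (LK J)" using tr[OF JS] aJ pa by blast
          ultimately have "a \<in> span (LK I \<inter> LK J)" by (rule span_inter_base[OF bf(2) LKB LKB])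
          moreover have "LK I \<inter> LK J = LK (I \<inter> J)" unfolding LK_def by auto
          ultimately have "\<alpha> \<in> span (I \<inter> J)" using tr[OF KS] pa by simp
          thus ?thesis using aK by simp
        qed
      qed
    qed
    thus ?thesis using gen_char[OF Phi, of "I \<inter> J"] KS by blast
  qed
  show ?thesis using union inter by blast
qed

end
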